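(* Let $p>5$ be a prime, $q=p^h$, and let $\mathcal{F}$ be the projective closure of $ax^n+by^m=1$ over $\mathbb{F}_q$, with $a,b\in\mathbb{F}_q^*$ and $m,n$ positive integers, $n\ge m>2$. Then $\mathcal{F}$ is classical with respect to the linear system $\Sigma_2$ of conics in each of the following cases: (a) $p\mid(2n-1)$ and $p\mid(m+1)$; (b) $p\mid(2m-1)$ and $p\mid(n+1)$; (c) $p\mid(2n-1)$ and $p\mid(m-2)$; (d) $p\mid(2m-1)$ and $p\mid(n-2)$; (e) $p\mid(m+1)$ and $p\mid(n-2)$; (f) $p\mid(n+1)$ and $p\mid(m-2)$.
   Context: For a geometrically irreducible projective plane curve over $\mathbb{F}_q$ with function field $\overline{\mathbb{F}}_q(x,y)$, let $\varphi_0,\dots,\varphi_5$ be the monomials of degree 2 in $x,y,1$, $\tau$ separating and $D^{(k)}_\tau$ Hasse derivatives. The order sequence w.r.t. conics is the lexicographically smallest $\varepsilon_0<\dots<\varepsilon_5$ with $\det(D^{(\varepsilon_i)}_\tau\varphi_j)\neq0$; the curve is classical w.r.t. $\Sigma_2$ if $\varepsilon_i=i$ for all $i$. *)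

theory Defs
  imports "HOL-Computational_Algebra.Polynomial" "Jordan_Normal_Form.Determinant"
begin

text \<open>The constant field: elements of the ambient field F that are algebraic over the
prime field F_p, i.e. the fixed points of some power of Frobenius.  In the function
field of a curve over the algebraic closure of F_q this is exactly that closure.\<close>
definition const_field :: "nat \<Rightarrow> 'f::field set" where
  "const_field p = {c. \<exists>r>0. c ^ (p ^ r) = c}"

definition alg_closed_subfield :: "'f::field set \<Rightarrow> bool" where
  "alg_closed_subfield K \<longleftrightarrow>
     (\<forall>P::'f poly. (\<forall>i. coeff P i \<in> K) \<and> degree P > 0 \<longrightarrow> (\<exists>c\<in>K. poly P c = 0))"

definition transcendental_over :: "'f::field set \<Rightarrow> 'f \<Rightarrow> bool" where
  "transcendental_over K t \<longleftrightarrow>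
     (\<forall>P::'f poly. (\<forall>i. coeff P i \<in> K) \<and> P \<noteq> 0 \<longrightarrow> poly P t \<noteq> 0)"

definition hasse_derivation :: "'f::field set \<Rightarrow> 'f \<Rightarrow> (nat \<Rightarrow> 'f \<Rightarrow> 'f) \<Rightarrow> bool" where
  "hasse_derivation K tau D \<longleftrightarrow>
     (\<forall>u. D 0 u = u) \<and>
     (\<forall>k u v. D k (u + v) = D k u + D k v) \<and>
     (\<forall>k u v. D k (u * v) = (\<Sum>i\<le>k. D i u * D (k - i) v)) \<and>
     (\<forall>k c. k > 0 \<longrightarrow> c \<in> K \<longrightarrow> D k c = 0) \<and>
     (\<forall>i j u. D i (D j u) = of_nat ((i + j) choose i) * D (i + j) u) \<and>
     D 1 tau = 1 \<and> (\<forall>k\<ge>2. D k tau = 0)"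

definition conic_monomials :: "'f::field \<Rightarrow> 'f \<Rightarrow> nat \<Rightarrow> 'f" where
  "conic_monomials x y j = [1, x, y, x^2, x*y, y^2] ! j"

definition wronskian_rows :: "(nat \<Rightarrow> 'f \<Rightarrow> 'f) \<Rightarrow> (nat \<Rightarrow> 'f) \<Rightarrow> (nat \<Rightarrow> nat) \<Rightarrow> 'f::field" where
  "wronskian_rows D phi eps = det (mat 6 6 (\<lambda>(i,j). D (eps i) (phi j)))"

definition strict_incr6 :: "(nat \<Rightarrow> nat) \<Rightarrow> bool" where
  "strict_incr6 eps \<longleftrightarrow> (\<forall>i j. i < j \<longrightarrow> j < 6 \<longrightarrow> eps i < eps j)"

definition lex_less6 :: "(nat \<Rightarrow> nat) \<Rightarrow> (nat \<Rightarrow> nat) \<Rightarrow> bool" where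
  "lex_less6 e1 e2 \<longleftrightarrow> (\<exists>k<6. (\<forall>i<k. e1 i = e2 i) \<and> e1 k < e2 k)"

definition is_conic_order_seq :: "(nat \<Rightarrow> 'f::field \<Rightarrow> 'f) \<Rightarrow> 'f \<Rightarrow> 'f \<Rightarrow> (nat \<Rightarrow> nat) \<Rightarrow> bool" where
  "is_conic_order_seq D x y eps \<longleftrightarrow>
     strict_incr6 eps \<and> wronskian_rows D (conic_monomials x y) eps \<noteq> 0 \<and>
     (\<forall>e. strict_incr6 e \<and> wronskian_rows D (conic_monomials x y) e \<noteq> 0 \<longrightarrow> \<not> lex_less6 e eps)"

definition classical_wrt_conics :: "(nat \<Rightarrow> 'f \<Rightarrow> 'f) \<Rightarrow> 'f \<Rightarrow> 'f::field \<Rightarrow> bool" where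
  "classical_wrt_conics D x y \<longleftrightarrow>
     (\<exists>eps. is_conic_order_seq D x y eps \<and> (\<forall>i<6. eps i = i))"

end

theory Submission
  imports Defs "HOL-Computational_Algebra.Primes"
begin

lemma frob:
  fixes c d :: "'f::field"
  assumes p: "prime p" and p0: "of_nat p = (0::'f)"
  shows "(c+d)^p = c^p + d^p"
proof -
  have p1: "p > 0" using p prime_gt_0_nat by blast
  have "(c+d)^p = (\<Sum>k\<le>p. of_nat (p choose k) * c^k * d^(p-k))"
    by (rule binomial_ring)
  also have "{..p} = insert 0 (insert p {1..<p})" using p1 by auto
  also have "(\<Sum>k\<in>insert 0 (insert p {1..<p}). of_nat (p choose k) * c^k * d^(p-k))
      = d^p + c^p + (\<Sum>k\<in>{1..<p}. of_nat (p choose k) * c^k * d^(p-k))"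
    using p1 by (simp add: sum.insert)
  also have "(\<Sum>k\<in>{1..<p}. of_nat (p choose k) * c^k * d^(p-k)) = (0::'f)"
  proof (rule sum.neutral, intro ballI)
    fix k assume k: "k \<in> {1..<p}"
    then have "p dvd (p choose k)" using dvd_choose_prime[of k p] p p1 by auto
    then obtain t where "p choose k = p * t" by (auto elim: dvdE)
    then have "(of_nat (p choose k) :: 'f) = 0" using p0 by simp
    then show "of_nat (p choose k) * c^k * d^(p-k) = 0" by simp
  qed
  finally show ?thesis by (simp add: add.commute)
qed

locale charp =
  fixes p :: nat and K :: "'f::field set"
  assumes p: "prime p" and p5: "p > 5" and p0: "of_nat p = (0::'f)"
  and Kdef: "K = const_field p"
begin

lemma inK_iff: "c \<in> K \<longleftrightarrow> (\<exists>r>0. c ^ (p ^ r) = c)"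
  by (simp add: Kdef const_field_def)

lemma pow_iter: assumes "c ^ (p ^ r) = (c::'f)" shows "c ^ (p ^ (r * t)) = c"
proof (induction t)
  case 0 then show ?case by simp
next
  case (Suc t)
  have "p ^ (r * Suc t) = p ^ (r * t) * p ^ r" by (simp add: power_add)
  then have "c ^ (p ^ (r * Suc t)) = (c ^ (p ^ (r * t))) ^ (p ^ r)"
    by (simp add: power_mult)
  then show ?case using Suc assms by simp
qed

lemma frob_iter: "((c::'f) + d) ^ (p ^ r) = c ^ (p ^ r) + d ^ (p ^ r)"
proof (induction r arbitrary: c d)
  case 0 then show ?case by simp
next
  case (Suc r)
  have "(c + d) ^ (p ^ Suc r) = ((c + d) ^ p) ^ (p ^ r)"
    by (simp add: power_mult)
  also have "\<dots> = (c^p + d^p) ^ (p ^ r)" using frob[OF p p0] by simp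
  also have "\<dots> = (c^p) ^ (p ^ r) + (d^p) ^ (p ^ r)" by (rule Suc)
  finally show ?case by (simp add: power_mult)
qed

lemma common:
  assumes "c \<in> K" "d \<in> K"
  obtains r where "r > 0" "c ^ (p ^ r) = c" "d ^ (p ^ r) = d"
proof -
  obtain r1 where r1: "r1 > 0" "c ^ (p ^ r1) = c" using assms inK_iff by blast
  obtain r2 where r2: "r2 > 0" "d ^ (p ^ r2) = d" using assms inK_iff by blast
  have "c ^ (p ^ (r1 * r2)) = c" using pow_iter[OF r1(2)] .
  moreover have "d ^ (p ^ (r1 * r2)) = d" using pow_iter[OF r2(2), of r1] by (simp add: mult.commute)
  ultimately show ?thesis using that[of "r1*r2"] r1 r2 by simp
qed

lemma K_add [intro]: assumes "c \<in> K" "d \<in> K" shows "c + d \<in> K"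
proof -
  obtain r where r: "r > 0" "c ^ (p ^ r) = c" "d ^ (p ^ r) = d" using common[OF assms] by blast
  have "(c + d) ^ (p ^ r) = c + d" using r frob_iter by simp
  then show ?thesis unfolding inK_iff using r(1) by blast
qed

lemma K_mult [intro]: assumes "c \<in> K" "d \<in> K" shows "c * d \<in> K"
proof -
  obtain r where r: "r > 0" "c ^ (p ^ r) = c" "d ^ (p ^ r) = d" using common[OF assms] by blast
  have "(c * d) ^ (p ^ r) = c * d" using r by (simp add: power_mult_distrib)
  then show ?thesis unfolding inK_iff using r(1) by blast
qed

lemma K_inverse [intro]: assumes "c \<in> K" shows "inverse c \<in> K"
proof -
  obtain r where r: "r > 0" "c ^ (p ^ r) = c" using assms inK_iff by blast
  have "(inverse c) ^ (p ^ r) = inverse c" using r by (simp add: power_inverse)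
  then show ?thesis unfolding inK_iff using r(1) by blast
qed

lemma K_divide [intro]: "c \<in> K \<Longrightarrow> d \<in> K \<Longrightarrow> c / d \<in> K"
  by (simp add: divide_inverse K_mult K_inverse)

lemma p_odd: "odd p"
  using prime_odd_nat[OF p] p5 by simp

lemma K_minus [intro]: "c \<in> K \<Longrightarrow> - c \<in> K"
proof -
  assume "c \<in> K"
  then obtain r where "r > 0" "c ^ (p ^ r) = c" using inK_iff by blast
  moreover have "odd (p ^ r)" using p_odd by simp
  ultimately have "(- c) ^ (p ^ r) = - c" by (simp add: power_minus_odd)
  then show "- c \<in> K" unfolding inK_iff using \<open>r > 0\<close> by blast
qed

lemma K_diff [intro]: "c \<in> K \<Longrightarrow> d \<in> K \<Longrightarrow> c - d \<in> K"
  using K_add[of c "- d"] K_minus[of d] by simp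

lemma K_one [intro]: "1 \<in> K" unfolding inK_iff by (rule exI[of _ 1]) simp
lemma K_zero [intro]: "0 \<in> K" unfolding inK_iff using p prime_gt_0_nat by (intro exI[of _ 1]) simp

lemma K_of_nat [intro]: "of_nat k \<in> K"
  by (induction k) (auto simp: K_add)

lemma K_numeral [intro]: "numeral w \<in> K"
  using K_of_nat[of "numeral w"] by simp

lemma K_power [intro]: "c \<in> K \<Longrightarrow> c ^ k \<in> K"
  by (induction k) (auto simp: K_mult)

lemma of_nat_nz: "\<not> p dvd k \<Longrightarrow> (of_nat k :: 'f) \<noteq> 0"
proof
  assume nd: "\<not> p dvd k" and z: "(of_nat k :: 'f) = 0"
  have "CHAR('f) dvd p" using p0 of_nat_eq_0_iff_char_dvd by blast
  moreover have "CHAR('f) \<noteq> 1" by simp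
  ultimately have "CHAR('f) = p" using p by (metis prime_nat_iff)
  then have "p dvd k" using z of_nat_eq_0_iff_char_dvd by metis
  then show False using nd by simp
qed

lemma nz2: "(2::'f) \<noteq> 0"
proof -
  have "\<not> p dvd (2::nat)"
  proof
    assume "p dvd (2::nat)"
    then have "p \<le> 2" by (rule dvd_imp_le) simp
    with p5 show False by simp
  qed
  then have "(of_nat 2 :: 'f) \<noteq> 0" by (rule of_nat_nz)
  then show ?thesis by (metis of_nat_numeral)
qed
lemma nz3: "(3::'f) \<noteq> 0"
proof -
  have "\<not> p dvd (3::nat)"
  proof
    assume "p dvd (3::nat)"
    then have "p \<le> 3" by (rule dvd_imp_le) simp
    with p5 show False by simp
  qed
  then have "(of_nat 3 :: 'f) \<noteq> 0" by (rule of_nat_nz)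
  then show ?thesis by (metis of_nat_numeral)
qed
lemma nz5: "(5::'f) \<noteq> 0"
proof -
  have "\<not> p dvd (5::nat)"
  proof
    assume "p dvd (5::nat)"
    then have "p \<le> 5" by (rule dvd_imp_le) simp
    with p5 show False by simp
  qed
  then have "(of_nat 5 :: 'f) \<noteq> 0" by (rule of_nat_nz)
  then show ?thesis by (metis of_nat_numeral)
qed

end

locale hasse =
  fixes K :: "'f::field set" and t :: 'f and D :: "nat \<Rightarrow> 'f \<Rightarrow> 'f"
  assumes H: "hasse_derivation K t D" and K1: "1 \<in> K"
begin

lemma D0: "D 0 u = u" using H unfolding hasse_derivation_def by blast
lemma Dadd: "D k (u + v) = D k u + D k v" using H unfolding hasse_derivation_def by blast
lemma Dmul: "D k (u * v) = (\<Sum>i\<le>k. D i u * D (k - i) v)" using H unfolding hasse_derivation_def by blast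
lemma Dconst: "k > 0 \<Longrightarrow> c \<in> K \<Longrightarrow> D k c = 0" using H unfolding hasse_derivation_def by blast
lemma Dcomp: "D i (D j u) = of_nat ((i + j) choose i) * D (i + j) u" using H unfolding hasse_derivation_def by blast
lemma Dt1: "D 1 t = 1" using H unfolding hasse_derivation_def by blast
lemma Dt2: "k \<ge> 2 \<Longrightarrow> D k t = 0" using H unfolding hasse_derivation_def by blast

lemma Dzero: "D k 0 = 0"
proof -
  have "D k (0 + 0) = D k 0 + D k 0" by (rule Dadd)
  then show ?thesis by (metis add_cancel_right_right add_0)
qed

lemma Dminus: "D k (- u) = - D k u"
proof -
  have "D k (u + - u) = D k u + D k (- u)" by (rule Dadd)
  then show ?thesis by (simp add: Dzero eq_neg_iff_add_eq_0 add.commute)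
qed

lemma Ddiff: "D k (u - v) = D k u - D k v"
  using Dadd[of k u "- v"] Dminus[of k v] by simp

lemma D1mul: "D 1 (u * v) = u * D 1 v + D 1 u * v"
  using Dmul[of 1 u v] by (simp add: D0)

lemma D1pow: "w * D 1 (w ^ k) = of_nat k * w ^ k * D 1 w"
proof (induction k)
  case 0
  then show ?case using Dconst[of 1 1] K1 by simp
next
  case (Suc k)
  have "w * D 1 (w ^ Suc k) = w * (w * D 1 (w ^ k)) + w * (D 1 w * w ^ k)"
    using D1mul[of w "w ^ k"] by (simp add: distrib_left)
  also have "\<dots> = w * (of_nat k * w ^ k * D 1 w) + w * (D 1 w * w ^ k)" using Suc by simp
  also have "\<dots> = of_nat (Suc k) * w ^ Suc k * D 1 w" by (simp add: algebra_simps)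
  finally show ?case .
qed

lemma Dnext: "D 1 (D k w) = of_nat (Suc k) * D (Suc k) w"
  using Dcomp[of 1 k w] by simp

lemma D1poly:
  assumes "\<forall>i. coeff Q i \<in> K"
  shows "D 1 (poly Q w) = poly (pderiv Q) w * D 1 w"
  using assms
proof (induction Q rule: pCons_induct)
  case 0
  then show ?case by (simp add: Dzero)
next
  case (pCons c Q)
  have c: "c \<in> K" using pCons.prems by (metis coeff_pCons_0)
  have Q: "\<forall>i. coeff Q i \<in> K" using pCons.prems by (metis coeff_pCons_Suc)
  have "D 1 (poly (pCons c Q) w) = D 1 c + D 1 (w * poly Q w)" by (simp add: Dadd)
  also have "\<dots> = w * (poly (pderiv Q) w * D 1 w) + D 1 w * poly Q w"
    using Dconst[OF _ c, of 1] pCons.IH[OF Q] D1mul[of w "poly Q w"] by simp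
  also have "\<dots> = poly (pderiv (pCons c Q)) w * D 1 w"
    by (simp add: pderiv_pCons algebra_simps)
  finally show ?case .
qed

end

definition Q1 :: "'f::field \<Rightarrow> 'f \<Rightarrow> 'f poly" where
  "Q1 nn s = [:0, (- s):]"

definition Q2 :: "'f::field \<Rightarrow> 'f \<Rightarrow> 'f poly" where
  "Q2 nn s = [:0, (s - nn*s), (- s + s^2):]"

definition Q3 :: "'f::field \<Rightarrow> 'f \<Rightarrow> 'f poly" where
  "Q3 nn s = [:0, (- 2*s + 3*nn*s - nn^2*s), (4*s - 3*s^2 - 3*nn*s + 3*nn*s^2 - nn^2*s), (- 2*s + 3*s^2 - s^3):]"

definition Q4 :: "'f::field \<Rightarrow> 'f \<Rightarrow> 'f poly" where
  "Q4 nn s = [:0, (6*s - 11*nn*s + 6*nn^2*s - nn^3*s), (- 18*s + 11*s^2 + 22*nn*s - 18*nn*s^2 + 7*nn^2*s^2 - 4*nn^3*s), (18*s - 22*s^2 + 6*s^3 - 11*nn*s + 18*nn*s^2 - 6*nn*s^3 - 6*nn^2*s + 4*nn^2*s^2 - nn^3*s), (- 6*s + 11*s^2 - 6*s^3 + s^4):]"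

definition Q5 :: "'f::field \<Rightarrow> 'f \<Rightarrow> 'f poly" where
  "Q5 nn s = [:0, (- 24*s + 50*nn*s - 35*nn^2*s + 10*nn^3*s - nn^4*s), (96*s - 50*s^2 - 150*nn*s + 105*nn*s^2 + 35*nn^2*s - 70*nn^2*s^2 + 30*nn^3*s + 15*nn^3*s^2 - 11*nn^4*s), (- 144*s + 150*s^2 - 35*s^3 + 150*nn*s - 210*nn*s^2 + 60*nn*s^3 + 35*nn^2*s + 30*nn^2*s^2 - 25*nn^2*s^3 - 30*nn^3*s + 30*nn^3*s^2 - 11*nn^4*s), (96*s - 150*s^2 + 70*s^3 - 10*s^4 - 50*nn*s + 105*nn*s^2 - 60*nn*s^3 + 10*nn*s^4 - 35*nn^2*s + 40*nn^2*s^2 - 10*nn^2*s^3 - 10*nn^3*s + 5*nn^3*s^2 - nn^4*s), (- 24*s + 50*s^2 - 35*s^3 + 10*s^4 - s^5):]"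


context charp begin

definition Kp :: "'f poly \<Rightarrow> bool" where "Kp P \<longleftrightarrow> (\<forall>i. coeff P i \<in> K)"

lemma Kp_0 [intro]: "Kp 0" by (auto simp: Kp_def)
lemma Kp_pCons [intro]: "c \<in> K \<Longrightarrow> Kp P \<Longrightarrow> Kp (pCons c P)"
  unfolding Kp_def by (auto simp: coeff_pCons split: nat.split)

lemma K_sum: "(\<And>i. i \<in> A \<Longrightarrow> f i \<in> K) \<Longrightarrow> sum f A \<in> K"
proof (induction A rule: infinite_finite_induct)
  case (infinite A) then show ?case by auto
next
  case empty then show ?case by auto
next
  case (insert x F) then show ?case by (simp add: K_add)
qed

lemma Kp_add [intro]: "Kp P \<Longrightarrow> Kp Q \<Longrightarrow> Kp (P + Q)"
  unfolding Kp_def by (auto simp: K_add)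

lemma Kp_mult [intro]: "Kp P \<Longrightarrow> Kp Q \<Longrightarrow> Kp (P * Q)"
  unfolding Kp_def coeff_mult by (intro allI K_sum K_mult) auto

lemma Kp_pcompose: "Kp P \<Longrightarrow> Kp Q \<Longrightarrow> Kp (pcompose P Q)"
proof (induction P rule: pCons_induct)
  case 0 then show ?case by auto
next
  case (pCons c P)
  have c: "c \<in> K" using pCons.prems unfolding Kp_def by (metis coeff_pCons_0)
  have P: "Kp P" using pCons.prems unfolding Kp_def by (metis coeff_pCons_Suc)
  show ?case unfolding pcompose_pCons using c P pCons by (intro Kp_add Kp_mult) auto
qed

lemma Kp_monom: "c \<in> K \<Longrightarrow> Kp (monom c k)"
  unfolding Kp_def by (auto simp: coeff_monom)

end

locale curve = charp p K + hasse K x D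
  for p :: nat and K :: "'f::field set" and x :: 'f and D +
  fixes a b y :: 'f and n m :: nat
  assumes aK: "a \<in> K" and bK: "b \<in> K" and a0: "a \<noteq> 0" and b0: "b \<noteq> 0"
  and n0: "n > 0" and m0: "m > 0"
  and trans: "transcendental_over K x"
  and eq: "a * x ^ n + b * y ^ m = 1"
  and mnz: "(of_nat m :: 'f) \<noteq> 0"
begin

abbreviation "nn \<equiv> (of_nat n :: 'f)"
abbreviation "mm \<equiv> (of_nat m :: 'f)"
definition "s = nn / mm"
definition "u = a * x ^ n"
definition "X = x * (1 - u)"
abbreviation "Y k \<equiv> D k y"

lemma sK [intro]: "s \<in> K" unfolding s_def by auto

lemma trans_x: "Kp P \<Longrightarrow> P \<noteq> 0 \<Longrightarrow> poly P x \<noteq> 0"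
  using trans unfolding transcendental_over_def Kp_def by blast

lemma trans_u: assumes "Kp P" "P \<noteq> 0" shows "poly P u \<noteq> 0"
proof -
  have "poly P u = poly (pcompose P (monom a n)) x"
    by (simp add: poly_pcompose u_def poly_monom)
  moreover have "Kp (pcompose P (monom a n))" using assms aK by (intro Kp_pcompose Kp_monom)
  moreover have "pcompose P (monom a n) \<noteq> 0"
    using assms pcompose_eq_0[of P "monom a n"] degree_monom_eq[OF a0] n0 by auto
  ultimately show ?thesis using trans_x by metis
qed

lemma x0: "x \<noteq> 0"
  using trans_x[of "[:0, 1:]"] by auto

lemma u1: "1 - u \<noteq> 0"
  using trans_u[of "[:1, -1:]"] by auto

lemma u0: "u \<noteq> 0"
  using trans_u[of "[:0, 1:]"] by auto

lemma X0: "X \<noteq> 0" using x0 u1 by (simp add: X_def)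

lemma y0: "y \<noteq> 0"
proof
  assume "y = 0"
  then have "u = 1" using eq m0 by (simp add: u_def power_0_left)
  then show False using u1 by simp
qed

lemma F1: "x * D 1 u = nn * u"
proof -
  have "D 1 u = a * D 1 (x ^ n) + D 1 a * x ^ n" unfolding u_def by (rule D1mul)
  then have "D 1 u = a * D 1 (x ^ n)" using Dconst[OF _ aK, of 1] by simp
  then have "x * D 1 u = a * (x * D 1 (x ^ n))" by (simp add: algebra_simps)
  also have "\<dots> = nn * u" using D1pow[of x n] Dt1 by (simp add: u_def algebra_simps)
  finally show ?thesis .
qed

lemma F2: "X * Y 1 = - (s * u * y)"
proof -
  have "D 1 (a * x ^ n + b * y ^ m) = D 1 1" using eq by simp
  then have "D 1 u + D 1 (b * y ^ m) = 0" using Dconst[OF _ K_one, of 1] by (simp add: Dadd u_def)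
  moreover have "D 1 (b * y ^ m) = b * D 1 (y ^ m)"
    using D1mul[of b "y ^ m"] Dconst[OF _ bK, of 1] by simp
  ultimately have e: "b * D 1 (y ^ m) = - D 1 u" by (simp add: eq_neg_iff_add_eq_0 add.commute)
  have "x * b * (y * D 1 (y ^ m)) = (x * y) * (b * D 1 (y ^ m))" by (simp add: algebra_simps)
  also have "\<dots> = - y * (x * D 1 u)" using e by simp
  finally have "x * b * (y * D 1 (y ^ m)) = - y * (x * D 1 u)" .
  then have "x * b * (mm * y ^ m * Y 1) = - y * (nn * u)" using D1pow[of y m] F1 by simp
  moreover have "b * y ^ m = 1 - u" using eq by (simp add: u_def algebra_simps)
  ultimately have "mm * (X * Y 1) = - (nn * u * y)" unfolding X_def
    by (metis (no_types, lifting) mult.assoc mult.commute mult.left_commute mult_minus_left)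
  then show ?thesis using mnz unfolding s_def by (simp add: field_simps)
qed

end

lemma power5_eq: "(x::'a::comm_monoid_mult) ^ 5 = x*x*x*x*x" by (simp add: eval_nat_numeral algebra_simps)

lemma Q1_step: "poly (Q1 nn s) (w::'f::field) = nn * w * (1 - w) * poly (pderiv [:1:]) w + (of_nat 0 * nn - s) * w * poly [:1:] w - of_nat 0 * (1 - w) * poly [:1:] w"
  unfolding Q1_def by (simp add: pderiv_pCons)
lemma Q2_step: "poly (Q2 nn s) w = nn * w * (1 - w) * poly (pderiv (Q1 nn s)) w + (of_nat 1 * nn - s) * w * poly (Q1 nn s) w - of_nat 1 * (1 - w) * poly (Q1 nn s) w"
  unfolding Q1_def Q2_def by (simp add: pderiv_pCons algebra_simps power2_eq_square power3_eq_cube power4_eq_xxxx power5_eq)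
lemma Q3_step: "poly (Q3 nn s) w = nn * w * (1 - w) * poly (pderiv (Q2 nn s)) w + (of_nat 2 * nn - s) * w * poly (Q2 nn s) w - of_nat 2 * (1 - w) * poly (Q2 nn s) w"
  unfolding Q2_def Q3_def by (simp add: pderiv_pCons algebra_simps power2_eq_square power3_eq_cube power4_eq_xxxx power5_eq)
lemma Q4_step: "poly (Q4 nn s) w = nn * w * (1 - w) * poly (pderiv (Q3 nn s)) w + (of_nat 3 * nn - s) * w * poly (Q3 nn s) w - of_nat 3 * (1 - w) * poly (Q3 nn s) w"
  unfolding Q3_def Q4_def by (simp add: pderiv_pCons algebra_simps power2_eq_square power3_eq_cube power4_eq_xxxx power5_eq)
lemma Q5_step: "poly (Q5 nn s) w = nn * w * (1 - w) * poly (pderiv (Q4 nn s)) w + (of_nat 4 * nn - s) * w * poly (Q4 nn s) w - of_nat 4 * (1 - w) * poly (Q4 nn s) w"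
  unfolding Q4_def Q5_def by (simp add: pderiv_pCons algebra_simps power2_eq_square power3_eq_cube power4_eq_xxxx power5_eq)

context curve begin

lemma DX: "D 1 X = 1 - u - nn * u"
proof -
  have "D 1 X = x * D 1 (1 - u) + D 1 x * (1 - u)" unfolding X_def by (rule D1mul)
  also have "D 1 (1 - u) = - D 1 u" using Ddiff[of 1 1 u] Dconst[OF _ K_one, of 1] by simp
  finally show ?thesis using F1 Dt1 by (simp add: algebra_simps)
qed

lemma step:
  assumes KQ: "Kp Q" and hyp: "of_nat (fact k) * X ^ k * Y k = y * poly Q u"
  shows "of_nat (fact (Suc k)) * X ^ Suc k * Y (Suc k) =
    y * (nn * u * (1 - u) * poly (pderiv Q) u + (of_nat k * nn - s) * u * poly Q u
         - of_nat k * (1 - u) * poly Q u)"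
proof -
  let ?c = "of_nat (fact k) :: 'f"
  have cK: "?c \<in> K" by (rule K_of_nat)
  have e0: "D 1 (?c * (X ^ k * Y k)) = D 1 (y * poly Q u)" using hyp by (simp add: mult.assoc)
  have "D 1 (?c * (X ^ k * Y k)) = ?c * D 1 (X ^ k * Y k)"
    using D1mul[of ?c "X ^ k * Y k"] Dconst[OF _ cK, of 1] by simp
  also have "D 1 (X ^ k * Y k) = X ^ k * (of_nat (Suc k) * Y (Suc k)) + D 1 (X ^ k) * Y k"
    using D1mul[of "X ^ k" "Y k"] Dnext[of k y] by simp
  finally have L: "X * D 1 (?c * (X ^ k * Y k)) =
     ?c * (of_nat (Suc k) * X ^ Suc k * Y (Suc k)) + ?c * (X * D 1 (X ^ k)) * Y k"
    by (simp add: algebra_simps)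
  have h1: "X * D 1 (X ^ k) = of_nat k * X ^ k * (1 - u - nn * u)" using D1pow[of X k] unfolding DX .
  have L2: "?c * (X * D 1 (X ^ k)) * Y k = of_nat k * (1 - u - nn * u) * (?c * X ^ k * Y k)"
    unfolding h1 by (simp add: algebra_simps)
  have "D 1 (y * poly Q u) = y * (poly (pderiv Q) u * D 1 u) + Y 1 * poly Q u"
    using D1mul[of y "poly Q u"] D1poly[of Q u] KQ unfolding Kp_def by simp
  then have R: "X * D 1 (y * poly Q u) = y * poly (pderiv Q) u * (1 - u) * (x * D 1 u) + (X * Y 1) * poly Q u"
    unfolding X_def by (simp add: algebra_simps)
  have R2: "X * D 1 (y * poly Q u) = y * poly (pderiv Q) u * (1 - u) * (nn * u) - s * u * y * poly Q u"
    using R F1 F2 by simp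
  let ?A = "?c * (of_nat (Suc k) * X ^ Suc k * Y (Suc k))"
  have "?A + of_nat k * (1 - u - nn * u) * (y * poly Q u) = ?A + ?c * (X * D 1 (X ^ k)) * Y k"
    unfolding L2 hyp ..
  also have "\<dots> = X * D 1 (?c * (X ^ k * Y k))" unfolding L ..
  also have "\<dots> = X * D 1 (y * poly Q u)" unfolding e0 ..
  also have "\<dots> = y * poly (pderiv Q) u * (1 - u) * (nn * u) - s * u * y * poly Q u" by (rule R2)
  finally have A: "?A = y * poly (pderiv Q) u * (1 - u) * (nn * u) - s * u * y * poly Q u
      - of_nat k * (1 - u - nn * u) * (y * poly Q u)" by (simp add: eq_diff_eq)
  have "(of_nat (fact (Suc k)) :: 'f) = of_nat (Suc k) * ?c" by (simp only: fact_Suc of_nat_mult of_nat_id)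
  then have "of_nat (fact (Suc k)) * X ^ Suc k * Y (Suc k) = ?A" by (simp add: algebra_simps)
  also have "\<dots> = y * (nn * u * (1 - u) * poly (pderiv Q) u + (of_nat k * nn - s) * u * poly Q u
         - of_nat k * (1 - u) * poly Q u)" unfolding A by (simp add: algebra_simps)
  finally show ?thesis .
qed

lemma Q1_K: "Kp (Q1 nn s)" unfolding Q1_def by (intro Kp_pCons Kp_0 K_add K_diff K_mult K_minus K_power K_numeral K_of_nat sK K_zero)
lemma Q2_K: "Kp (Q2 nn s)" unfolding Q2_def by (intro Kp_pCons Kp_0 K_add K_diff K_mult K_minus K_power K_numeral K_of_nat sK K_zero)
lemma Q3_K: "Kp (Q3 nn s)" unfolding Q3_def by (intro Kp_pCons Kp_0 K_add K_diff K_mult K_minus K_power K_numeral K_of_nat sK K_zero)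
lemma Q4_K: "Kp (Q4 nn s)" unfolding Q4_def by (intro Kp_pCons Kp_0 K_add K_diff K_mult K_minus K_power K_numeral K_of_nat sK K_zero)


end

lemma bit0_eq0: assumes "(2::'f::field) \<noteq> 0"
  shows "(numeral (Num.Bit0 w) = (0::'f)) = (numeral w = (0::'f))"
proof -
  have "(numeral (Num.Bit0 w)::'f) = numeral w + numeral w" by (rule numeral_Bit0)
  also have "\<dots> = 2 * numeral w" by (rule mult_2[symmetric])
  finally have e: "(numeral (Num.Bit0 w)::'f) = 2 * numeral w" .
  show ?thesis using assms by (simp only: e mult_eq_0_iff) simp
qed

lemma comb9:
  fixes c q2 q3 q4 q5 P2 P3 P4 P5 :: "'f::field"
  assumes "c^2 * q2 = P2" "c^3 * q3 = P3" "c^4 * q4 = P4" "c^5 * q5 = P5"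
  shows "c^9 * (40 * q3^3 - 45 * q2 * q3 * q4 + 9 * q2^2 * q5) = 40 * P3^3 - 45 * P2 * P3 * P4 + 9 * P2^2 * P5"
  unfolding assms[symmetric] by (simp add: algebra_simps power2_eq_square power3_eq_cube power_add[symmetric] eval_nat_numeral)

lemma Q2_case_a: assumes "(2::'f::field) \<noteq> 0"
  shows "(2::'f)^2 * poly (Q2 (1/2) (- 1/2)) w = poly [:0, - 1, 3:] w"
  using assms unfolding Q2_def by (simp add: field_simps bit0_eq0[OF assms] power2_eq_square power3_eq_cube power4_eq_xxxx)
lemma Q3_case_a: assumes "(2::'f::field) \<noteq> 0"
  shows "(2::'f)^3 * poly (Q3 (1/2) (- 1/2)) w = poly [:0, 3, - 12, 15:] w"
  using assms unfolding Q3_def by (simp add: field_simps bit0_eq0[OF assms] power2_eq_square power3_eq_cube power4_eq_xxxx)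
lemma Q4_case_a: assumes "(2::'f::field) \<noteq> 0"
  shows "(2::'f)^4 * poly (Q4 (1/2) (- 1/2)) w = poly [:0, - 15, 75, - 141, 105:] w"
  using assms unfolding Q4_def by (simp add: field_simps bit0_eq0[OF assms] power2_eq_square power3_eq_cube power4_eq_xxxx)
lemma Q5_case_a: assumes "(2::'f::field) \<noteq> 0"
  shows "(2::'f)^5 * poly (Q5 (1/2) (- 1/2)) w = poly [:0, 105, - 630, 1530, - 1830, 945:] w"
  using assms unfolding Q5_def by (simp add: field_simps bit0_eq0[OF assms] power2_eq_square power3_eq_cube power4_eq_xxxx)
lemma R_case_a:
  "40 * (poly [:0, 3, - 12, 15:] (w::'f::field))^3 - 45 * poly [:0, - 1, 3:] w * poly [:0, 3, - 12, 15:] w * poly [:0, - 15, 75, - 141, 105:] w + 9 * (poly [:0, - 1, 3:] w)^2 * poly [:0, 105, - 630, 1530, - 1830, 945:] w = poly [:0, 0, 0, 0, 0, 0, 1080, - 3240, 3240, - 1080:] w"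
  by (simp add: algebra_simps power2_eq_square power3_eq_cube)
lemma Q2_case_b: assumes "(2::'f::field) \<noteq> 0"
  shows "(2::'f)^2 * poly (Q2 (- 1) (- 2)) w = poly [:0, - 16, 24:] w"
  using assms unfolding Q2_def by (simp add: field_simps bit0_eq0[OF assms] power2_eq_square power3_eq_cube power4_eq_xxxx)
lemma Q3_case_b: assumes "(2::'f::field) \<noteq> 0"
  shows "(2::'f)^3 * poly (Q3 (- 1) (- 2)) w = poly [:0, 96, - 288, 192:] w"
  using assms unfolding Q3_def by (simp add: field_simps bit0_eq0[OF assms] power2_eq_square power3_eq_cube power4_eq_xxxx)
lemma Q4_case_b: assumes "(2::'f::field) \<noteq> 0"
  shows "(2::'f)^4 * poly (Q4 (- 1) (- 2)) w = poly [:0, - 768, 3456, - 4608, 1920:] w"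
  using assms unfolding Q4_def by (simp add: field_simps bit0_eq0[OF assms] power2_eq_square power3_eq_cube power4_eq_xxxx)
lemma Q5_case_b: assumes "(2::'f::field) \<noteq> 0"
  shows "(2::'f)^5 * poly (Q5 (- 1) (- 2)) w = poly [:0, 7680, - 46080, 92160, - 76800, 23040:] w"
  using assms unfolding Q5_def by (simp add: field_simps bit0_eq0[OF assms] power2_eq_square power3_eq_cube power4_eq_xxxx)
lemma R_case_b:
  "40 * (poly [:0, 96, - 288, 192:] (w::'f::field))^3 - 45 * poly [:0, - 16, 24:] w * poly [:0, 96, - 288, 192:] w * poly [:0, - 768, 3456, - 4608, 1920:] w + 9 * (poly [:0, - 16, 24:] w)^2 * poly [:0, 7680, - 46080, 92160, - 76800, 23040:] w = poly [:0, 0, 0, 0, 0, 0, - 4423680, 13271040, - 13271040, 4423680:] w"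
  by (simp add: algebra_simps power2_eq_square power3_eq_cube)
lemma Q2_case_c: assumes "(2::'f::field) \<noteq> 0"
  shows "(4::'f)^2 * poly (Q2 (1/2) (1/4)) w = poly [:0, 2, - 3:] w"
  using assms unfolding Q2_def by (simp add: field_simps bit0_eq0[OF assms] power2_eq_square power3_eq_cube power4_eq_xxxx)
lemma Q3_case_c: assumes "(2::'f::field) \<noteq> 0"
  shows "(4::'f)^3 * poly (Q3 (1/2) (1/4)) w = poly [:0, - 12, 30, - 21:] w"
  using assms unfolding Q3_def by (simp add: field_simps bit0_eq0[OF assms] power2_eq_square power3_eq_cube power4_eq_xxxx)
lemma Q4_case_c: assumes "(2::'f::field) \<noteq> 0"
  shows "(4::'f)^4 * poly (Q4 (1/2) (1/4)) w = poly [:0, 120, - 420, 516, - 231:] w"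
  using assms unfolding Q4_def by (simp add: field_simps bit0_eq0[OF assms] power2_eq_square power3_eq_cube power4_eq_xxxx)
lemma Q5_case_c: assumes "(2::'f::field) \<noteq> 0"
  shows "(4::'f)^5 * poly (Q5 (1/2) (1/4)) w = poly [:0, - 1680, 7560, - 13140, 10620, - 3465:] w"
  using assms unfolding Q5_def by (simp add: field_simps bit0_eq0[OF assms] power2_eq_square power3_eq_cube power4_eq_xxxx)
lemma R_case_c:
  "40 * (poly [:0, - 12, 30, - 21:] (w::'f::field))^3 - 45 * poly [:0, 2, - 3:] w * poly [:0, - 12, 30, - 21:] w * poly [:0, 120, - 420, 516, - 231:] w + 9 * (poly [:0, 2, - 3:] w)^2 * poly [:0, - 1680, 7560, - 13140, 10620, - 3465:] w = poly [:0, 0, 0, 0, 0, 0, - 5400, 14580, - 12960, 3780:] w"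
  by (simp add: algebra_simps power2_eq_square power3_eq_cube)
lemma Q2_case_d: assumes "(2::'f::field) \<noteq> 0"
  shows "(2::'f)^2 * poly (Q2 (2) (4)) w = poly [:0, - 16, 48:] w"
  using assms unfolding Q2_def by (simp add: field_simps bit0_eq0[OF assms] power2_eq_square power3_eq_cube power4_eq_xxxx)
lemma Q3_case_d: assumes "(2::'f::field) \<noteq> 0"
  shows "(2::'f)^3 * poly (Q3 (2) (4)) w = poly [:0, 0, 192, - 192:] w"
  using assms unfolding Q3_def by (simp add: field_simps bit0_eq0[OF assms] power2_eq_square power3_eq_cube power4_eq_xxxx)
lemma Q4_case_d: assumes "(2::'f::field) \<noteq> 0"
  shows "(2::'f)^4 * poly (Q4 (2) (4)) w = poly [:0, 0, 384, - 768, 384:] w"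
  using assms unfolding Q4_def by (simp add: field_simps bit0_eq0[OF assms] power2_eq_square power3_eq_cube power4_eq_xxxx)
lemma Q5_case_d: assumes "(2::'f::field) \<noteq> 0"
  shows "(2::'f)^5 * poly (Q5 (2) (4)) w = poly [:0:] w"
  using assms unfolding Q5_def by (simp add: field_simps bit0_eq0[OF assms] power2_eq_square power3_eq_cube power4_eq_xxxx)
lemma R_case_d:
  "40 * (poly [:0, 0, 192, - 192:] (w::'f::field))^3 - 45 * poly [:0, - 16, 48:] w * poly [:0, 0, 192, - 192:] w * poly [:0, 0, 384, - 768, 384:] w + 9 * (poly [:0, - 16, 48:] w)^2 * poly [:0:] w = poly [:0, 0, 0, 0, 0, 53084160, - 35389440, - 212336640, 318504960, - 123863040:] w"
  by (simp add: algebra_simps power2_eq_square power3_eq_cube)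
lemma Q2_case_e: assumes "(2::'f::field) \<noteq> 0"
  shows "(1::'f)^2 * poly (Q2 (2) (- 2)) w = poly [:0, 2, 6:] w"
  using assms unfolding Q2_def by (simp add: field_simps bit0_eq0[OF assms] power2_eq_square power3_eq_cube power4_eq_xxxx)
lemma Q3_case_e: assumes "(2::'f::field) \<noteq> 0"
  shows "(1::'f)^3 * poly (Q3 (2) (- 2)) w = poly [:0, 0, 24, 24:] w"
  using assms unfolding Q3_def by (simp add: field_simps bit0_eq0[OF assms] power2_eq_square power3_eq_cube power4_eq_xxxx)
lemma Q4_case_e: assumes "(2::'f::field) \<noteq> 0"
  shows "(1::'f)^4 * poly (Q4 (2) (- 2)) w = poly [:0, 0, 24, 240, 120:] w"
  using assms unfolding Q4_def by (simp add: field_simps bit0_eq0[OF assms] power2_eq_square power3_eq_cube power4_eq_xxxx)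
lemma Q5_case_e: assumes "(2::'f::field) \<noteq> 0"
  shows "(1::'f)^5 * poly (Q5 (2) (- 2)) w = poly [:0, 0, 0, 720, 2400, 720:] w"
  using assms unfolding Q5_def by (simp add: field_simps bit0_eq0[OF assms] power2_eq_square power3_eq_cube power4_eq_xxxx)
lemma R_case_e:
  "40 * (poly [:0, 0, 24, 24:] (w::'f::field))^3 - 45 * poly [:0, 2, 6:] w * poly [:0, 0, 24, 24:] w * poly [:0, 0, 24, 240, 120:] w + 9 * (poly [:0, 2, 6:] w)^2 * poly [:0, 0, 0, 720, 2400, 720:] w = poly [:0, 0, 0, 0, 0, - 25920, 69120, - 51840, 0, 8640:] w"
  by (simp add: algebra_simps power2_eq_square power3_eq_cube)
lemma Q2_case_f: assumes "(2::'f::field) \<noteq> 0"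
  shows "(2::'f)^2 * poly (Q2 (- 1) (- 1/2)) w = poly [:0, - 4, 3:] w"
  using assms unfolding Q2_def by (simp add: field_simps bit0_eq0[OF assms] power2_eq_square power3_eq_cube power4_eq_xxxx)
lemma Q3_case_f: assumes "(2::'f::field) \<noteq> 0"
  shows "(2::'f)^3 * poly (Q3 (- 1) (- 1/2)) w = poly [:0, 24, - 36, 15:] w"
  using assms unfolding Q3_def by (simp add: field_simps bit0_eq0[OF assms] power2_eq_square power3_eq_cube power4_eq_xxxx)
lemma Q4_case_f: assumes "(2::'f::field) \<noteq> 0"
  shows "(2::'f)^4 * poly (Q4 (- 1) (- 1/2)) w = poly [:0, - 192, 432, - 360, 105:] w"
  using assms unfolding Q4_def by (simp add: field_simps bit0_eq0[OF assms] power2_eq_square power3_eq_cube power4_eq_xxxx)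
lemma Q5_case_f: assumes "(2::'f::field) \<noteq> 0"
  shows "(2::'f)^5 * poly (Q5 (- 1) (- 1/2)) w = poly [:0, 1920, - 5760, 7200, - 4200, 945:] w"
  using assms unfolding Q5_def by (simp add: field_simps bit0_eq0[OF assms] power2_eq_square power3_eq_cube power4_eq_xxxx)
lemma R_case_f:
  "40 * (poly [:0, 24, - 36, 15:] (w::'f::field))^3 - 45 * poly [:0, - 4, 3:] w * poly [:0, 24, - 36, 15:] w * poly [:0, - 192, 432, - 360, 105:] w + 9 * (poly [:0, - 4, 3:] w)^2 * poly [:0, 1920, - 5760, 7200, - 4200, 945:] w = poly [:0, 0, 0, 0, 0, 0, 4320, - 9720, 6480, - 1080:] w"
  by (simp add: algebra_simps power2_eq_square power3_eq_cube)

context charp begin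
lemma nz235: "(of_nat (2^i * 3^j * 5^k) :: 'f) \<noteq> 0"
proof (rule of_nat_nz)
  show "\<not> p dvd 2^i * 3^j * 5^k"
  proof
    assume "p dvd 2^i * 3^j * 5^k"
    then have "p dvd 2^i \<or> p dvd 3^j \<or> p dvd 5^k" using p by (simp add: prime_dvd_mult_iff)
    then have "p dvd 2 \<or> p dvd 3 \<or> p dvd 5" using p prime_dvd_power by blast
    then have "p \<le> 5" by (auto dest: dvd_imp_le)
    then show False using p5 by simp
  qed
qed
lemma nz135: "(135::'f) \<noteq> 0" using nz235[of 0 3 1] by simp
lemma nz405: "(405::'f) \<noteq> 0" using nz235[of 0 4 1] by simp
lemma nz675: "(675::'f) \<noteq> 0" using nz235[of 0 3 2] by simp
lemma nz8640: "(8640::'f) \<noteq> 0" using nz235[of 6 3 1] by simp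
end

lemma cramer3:
  fixes A B W a2 a3 a4 a5 :: "'f::field"
  assumes e3: "a3*A + a2*B = 0" and e4: "a4*A + a3*B + a2^2*W = 0"
    and e5: "a5*A + a4*B + 2*a2*a3*W = 0"
    and nz: "a2*(2*a3^3 - 3*a2*a3*a4 + a2^2*a5) \<noteq> 0"
  shows "A = 0 \<and> B = 0 \<and> W = 0"
proof -
  let ?d = "a2*(2*a3^3 - 3*a2*a3*a4 + a2^2*a5)"
  have "?d * W = (a4^2-a3*a5)*(a3*A + a2*B) - (a3*a4-a2*a5)*(a4*A + a3*B + a2^2*W) + (a3^2-a2*a4)*(a5*A + a4*B + 2*a2*a3*W)"
    by (simp add: algebra_simps power2_eq_square power3_eq_cube)
  then have W: "W = 0" using e3 e4 e5 nz by simp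
  have "?d * A = (2*a2*a3^2-a2^2*a4)*(a3*A + a2*B) - 2*a2^2*a3*(a4*A + a3*B + a2^2*W) + a2^3*(a5*A + a4*B + 2*a2*a3*W)"
    by (simp add: algebra_simps power2_eq_square power3_eq_cube)
  then have A: "A = 0" using e3 e4 e5 nz by simp
  have "?d * B = - (2*a2*a3*a4-a2^2*a5)*(a3*A + a2*B) + 2*a2*a3^2*(a4*A + a3*B + a2^2*W) - a3*a2^2*(a5*A + a4*B + 2*a2*a3*W)"
    by (simp add: algebra_simps power2_eq_square power3_eq_cube)
  then have B: "B = 0" using e3 e4 e5 nz by simp
  show ?thesis using A B W by simp
qed

lemma delta_id:
  fixes X Y2 Y3 Y4 Y5 :: "'f::field"
  shows "8640 * X^11 * (Y2 * (2 * Y3^3 - 3 * Y2 * Y3 * Y4 + Y2^2 * Y5)) =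
    40 * (2*X^2*Y2) * (6*X^3*Y3)^3 - 45 * (2*X^2*Y2)^2 * (6*X^3*Y3) * (24*X^4*Y4) + 9 * (2*X^2*Y2)^3 * (120*X^5*Y5)"
  by (simp add: algebra_simps eval_nat_numeral)

locale curve2 = curve p K x D a b y n m
  for p K and x :: "'f::field" and D a b y n m +
  assumes cs: "(2 * (of_nat n::'f) = 1 \<and> (of_nat m::'f) = -1) \<or> ((of_nat n::'f) = -1 \<and> 2 * (of_nat m::'f) = 1) \<or> (2 * (of_nat n::'f) = 1 \<and> (of_nat m::'f) = 2) \<or> ((of_nat n::'f) = 2 \<and> 2 * (of_nat m::'f) = 1) \<or> ((of_nat n::'f) = 2 \<and> (of_nat m::'f) = -1) \<or> ((of_nat n::'f) = -1 \<and> (of_nat m::'f) = 2)"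
begin

lemma Yc1: "of_nat (fact 1) * X ^ 1 * Y 1 = y * poly (Q1 nn s) u"
proof -
  have h: "of_nat (fact 0) * X ^ 0 * Y 0 = y * poly [:1:] u" by (simp add: D0)
  have "Kp [:1:]" by (intro Kp_pCons Kp_0 K_one)
  from step[OF this h] show ?thesis using Q1_step[of nn s u] by simp
qed
lemma Yc2: "of_nat (fact 2) * X ^ 2 * Y 2 = y * poly (Q2 nn s) u"
  using step[OF Q1_K, of 1] Yc1 Q2_step[of nn s u] by (simp add: numeral_2_eq_2)
lemma Yc3: "of_nat (fact 3) * X ^ 3 * Y 3 = y * poly (Q3 nn s) u"
  using step[OF Q2_K, of 2] Yc2 Q3_step[of nn s u] by (simp add: numeral_3_eq_3)
lemma Yc4: "of_nat (fact 4) * X ^ 4 * Y 4 = y * poly (Q4 nn s) u"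
proof -
  have "(4::nat) = Suc 3" by simp
  then show ?thesis using step[OF Q3_K, of 3] Yc3 Q4_step[of nn s u] by (simp only:)
qed
lemma Yc5: "of_nat (fact 5) * X ^ 5 * Y 5 = y * poly (Q5 nn s) u"
proof -
  have "(5::nat) = Suc 4" by simp
  then show ?thesis using step[OF Q4_K, of 4] Yc4 Q5_step[of nn s u] by (simp only:)
qed

lemma key_gen:
  assumes "nn = nv" "s = sv" "c \<noteq> 0"
    "c^2 * poly (Q2 nv sv) u = poly LP2 u" "c^3 * poly (Q3 nv sv) u = poly LP3 u"
    "c^4 * poly (Q4 nv sv) u = poly LP4 u" "c^5 * poly (Q5 nv sv) u = poly LP5 u"
    "40 * (poly LP3 u)^3 - 45 * poly LP2 u * poly LP3 u * poly LP4 u + 9 * (poly LP2 u)^2 * poly LP5 u = poly LR u"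
    "Kp LP2" "LP2 \<noteq> 0" "Kp LR" "LR \<noteq> 0"
  shows "poly (Q2 nn s) u \<noteq> 0 \<and>
    40 * poly (Q3 nn s) u ^ 3 - 45 * poly (Q2 nn s) u * poly (Q3 nn s) u * poly (Q4 nn s) u
      + 9 * poly (Q2 nn s) u ^ 2 * poly (Q5 nn s) u \<noteq> 0"
proof
  have "poly LP2 u \<noteq> 0" using trans_u assms by blast
  then show "poly (Q2 nn s) u \<noteq> 0" using assms(1,2,4) by auto
  have "poly LR u \<noteq> 0" using trans_u assms by blast
  moreover have "c^9 * (40 * poly (Q3 nn s) u ^ 3 - 45 * poly (Q2 nn s) u * poly (Q3 nn s) u * poly (Q4 nn s) u
      + 9 * poly (Q2 nn s) u ^ 2 * poly (Q5 nn s) u) = poly LR u"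
    using comb9[OF assms(4-7)] assms(1,2,8) by simp
  ultimately show "40 * poly (Q3 nn s) u ^ 3 - 45 * poly (Q2 nn s) u * poly (Q3 nn s) u * poly (Q4 nn s) u
      + 9 * poly (Q2 nn s) u ^ 2 * poly (Q5 nn s) u \<noteq> 0" by auto
qed

lemma key: "poly (Q2 nn s) u \<noteq> 0 \<and>
    40 * poly (Q3 nn s) u ^ 3 - 45 * poly (Q2 nn s) u * poly (Q3 nn s) u * poly (Q4 nn s) u
      + 9 * poly (Q2 nn s) u ^ 2 * poly (Q5 nn s) u \<noteq> 0"
proof -
  have c_a: "2 * nn = 1 \<and> mm = -1 \<Longrightarrow> ?thesis"
  proof -
    assume h: "2 * nn = 1 \<and> mm = -1"
    have n1: "nn = 1/2" using h nz2 by (auto simp: field_simps)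
    have m1: "mm = - 1" using h nz2 by (auto simp: field_simps)
    have s1: "s = - 1/2" unfolding s_def n1 m1 using nz2 by (simp add: field_simps bit0_eq0[OF nz2])
    note e1 = n1 s1
    show ?thesis
      apply (rule key_gen[of "1/2" "- 1/2" "2" "[:0, - 1, 3:]" "[:0, 3, - 12, 15:]" "[:0, - 15, 75, - 141, 105:]" "[:0, 105, - 630, 1530, - 1830, 945:]" "[:0, 0, 0, 0, 0, 0, 1080, - 3240, 3240, - 1080:]"])
      using e1 nz2 nz135 nz405 nz675 Q2_case_a[OF nz2] Q3_case_a[OF nz2] Q4_case_a[OF nz2] Q5_case_a[OF nz2] R_case_a
      by (auto simp: bit0_eq0[OF nz2] intro!: Kp_pCons Kp_0 K_numeral K_minus K_zero K_one)
  qed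
  have c_b: "nn = -1 \<and> 2 * mm = 1 \<Longrightarrow> ?thesis"
  proof -
    assume h: "nn = -1 \<and> 2 * mm = 1"
    have n1: "nn = - 1" using h nz2 by (auto simp: field_simps)
    have m1: "mm = 1/2" using h nz2 by (auto simp: field_simps)
    have s1: "s = - 2" unfolding s_def n1 m1 using nz2 by (simp add: field_simps bit0_eq0[OF nz2])
    note e1 = n1 s1
    show ?thesis
      apply (rule key_gen[of "- 1" "- 2" "2" "[:0, - 16, 24:]" "[:0, 96, - 288, 192:]" "[:0, - 768, 3456, - 4608, 1920:]" "[:0, 7680, - 46080, 92160, - 76800, 23040:]" "[:0, 0, 0, 0, 0, 0, - 4423680, 13271040, - 13271040, 4423680:]"])
      using e1 nz2 nz135 nz405 nz675 Q2_case_b[OF nz2] Q3_case_b[OF nz2] Q4_case_b[OF nz2] Q5_case_b[OF nz2] R_case_b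
      by (auto simp: bit0_eq0[OF nz2] intro!: Kp_pCons Kp_0 K_numeral K_minus K_zero K_one)
  qed
  have c_c: "2 * nn = 1 \<and> mm = 2 \<Longrightarrow> ?thesis"
  proof -
    assume h: "2 * nn = 1 \<and> mm = 2"
    have n1: "nn = 1/2" using h nz2 by (auto simp: field_simps)
    have m1: "mm = 2" using h nz2 by (auto simp: field_simps)
    have s1: "s = 1/4" unfolding s_def n1 m1 using nz2 by (simp add: field_simps bit0_eq0[OF nz2])
    note e1 = n1 s1
    show ?thesis
      apply (rule key_gen[of "1/2" "1/4" "4" "[:0, 2, - 3:]" "[:0, - 12, 30, - 21:]" "[:0, 120, - 420, 516, - 231:]" "[:0, - 1680, 7560, - 13140, 10620, - 3465:]" "[:0, 0, 0, 0, 0, 0, - 5400, 14580, - 12960, 3780:]"])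
      using e1 nz2 nz135 nz405 nz675 Q2_case_c[OF nz2] Q3_case_c[OF nz2] Q4_case_c[OF nz2] Q5_case_c[OF nz2] R_case_c
      by (auto simp: bit0_eq0[OF nz2] intro!: Kp_pCons Kp_0 K_numeral K_minus K_zero K_one)
  qed
  have c_d: "nn = 2 \<and> 2 * mm = 1 \<Longrightarrow> ?thesis"
  proof -
    assume h: "nn = 2 \<and> 2 * mm = 1"
    have n1: "nn = 2" using h nz2 by (auto simp: field_simps)
    have m1: "mm = 1/2" using h nz2 by (auto simp: field_simps)
    have s1: "s = 4" unfolding s_def n1 m1 using nz2 by (simp add: field_simps bit0_eq0[OF nz2])
    note e1 = n1 s1
    show ?thesis
      apply (rule key_gen[of "2" "4" "2" "[:0, - 16, 48:]" "[:0, 0, 192, - 192:]" "[:0, 0, 384, - 768, 384:]" "[:0:]" "[:0, 0, 0, 0, 0, 53084160, - 35389440, - 212336640, 318504960, - 123863040:]"])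
      using e1 nz2 nz135 nz405 nz675 Q2_case_d[OF nz2] Q3_case_d[OF nz2] Q4_case_d[OF nz2] Q5_case_d[OF nz2] R_case_d
      by (auto simp: bit0_eq0[OF nz2] intro!: Kp_pCons Kp_0 K_numeral K_minus K_zero K_one)
  qed
  have c_e: "nn = 2 \<and> mm = -1 \<Longrightarrow> ?thesis"
  proof -
    assume h: "nn = 2 \<and> mm = -1"
    have n1: "nn = 2" using h nz2 by (auto simp: field_simps)
    have m1: "mm = - 1" using h nz2 by (auto simp: field_simps)
    have s1: "s = - 2" unfolding s_def n1 m1 using nz2 by (simp add: field_simps bit0_eq0[OF nz2])
    note e1 = n1 s1
    show ?thesis
      apply (rule key_gen[of "2" "- 2" "1" "[:0, 2, 6:]" "[:0, 0, 24, 24:]" "[:0, 0, 24, 240, 120:]" "[:0, 0, 0, 720, 2400, 720:]" "[:0, 0, 0, 0, 0, - 25920, 69120, - 51840, 0, 8640:]"])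
      using e1 nz2 nz135 nz405 nz675 Q2_case_e[OF nz2] Q3_case_e[OF nz2] Q4_case_e[OF nz2] Q5_case_e[OF nz2] R_case_e
      by (auto simp: bit0_eq0[OF nz2] intro!: Kp_pCons Kp_0 K_numeral K_minus K_zero K_one)
  qed
  have c_f: "nn = -1 \<and> mm = 2 \<Longrightarrow> ?thesis"
  proof -
    assume h: "nn = -1 \<and> mm = 2"
    have n1: "nn = - 1" using h nz2 by (auto simp: field_simps)
    have m1: "mm = 2" using h nz2 by (auto simp: field_simps)
    have s1: "s = - 1/2" unfolding s_def n1 m1 using nz2 by (simp add: field_simps bit0_eq0[OF nz2])
    note e1 = n1 s1
    show ?thesis
      apply (rule key_gen[of "- 1" "- 1/2" "2" "[:0, - 4, 3:]" "[:0, 24, - 36, 15:]" "[:0, - 192, 432, - 360, 105:]" "[:0, 1920, - 5760, 7200, - 4200, 945:]" "[:0, 0, 0, 0, 0, 0, 4320, - 9720, 6480, - 1080:]"])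
      using e1 nz2 nz135 nz405 nz675 Q2_case_f[OF nz2] Q3_case_f[OF nz2] Q4_case_f[OF nz2] Q5_case_f[OF nz2] R_case_f
      by (auto simp: bit0_eq0[OF nz2] intro!: Kp_pCons Kp_0 K_numeral K_minus K_zero K_one)
  qed
  show ?thesis using cs c_a c_b c_c c_d c_e c_f by blast
qed

lemma Delta_nz: "Y 2 * (2 * Y 3 ^ 3 - 3 * Y 2 * Y 3 * Y 4 + Y 2 ^ 2 * Y 5) \<noteq> 0"
proof -
  have f2: "2 * X^2 * Y 2 = y * poly (Q2 nn s) u" using Yc2 by simp
  have f3: "6 * X^3 * Y 3 = y * poly (Q3 nn s) u" using Yc3 by (simp add: eval_nat_numeral)
  have f4: "24 * X^4 * Y 4 = y * poly (Q4 nn s) u" using Yc4 by (simp add: eval_nat_numeral)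
  have f5: "120 * X^5 * Y 5 = y * poly (Q5 nn s) u" using Yc5 by (simp add: eval_nat_numeral)
  have "8640 * X^11 * (Y 2 * (2 * Y 3 ^ 3 - 3 * Y 2 * Y 3 * Y 4 + Y 2 ^ 2 * Y 5)) =
    y^4 * (poly (Q2 nn s) u * (40 * poly (Q3 nn s) u ^ 3 - 45 * poly (Q2 nn s) u * poly (Q3 nn s) u * poly (Q4 nn s) u
      + 9 * poly (Q2 nn s) u ^ 2 * poly (Q5 nn s) u))"
    unfolding delta_id f2 f3 f4 f5 by (simp add: algebra_simps eval_nat_numeral)
  moreover have "y^4 * (poly (Q2 nn s) u * (40 * poly (Q3 nn s) u ^ 3 - 45 * poly (Q2 nn s) u * poly (Q3 nn s) u * poly (Q4 nn s) u
      + 9 * poly (Q2 nn s) u ^ 2 * poly (Q5 nn s) u)) \<noteq> 0"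
    using key y0 by simp
  ultimately show ?thesis by (metis mult_zero_right)
qed

end

lemma set6: "{0..<6::nat} = {0,1,2,3,4,5}" by auto
lemma atMost0': "{..0::nat} = {0}" by auto
lemma atMost1': "{..Suc 0} = {0, Suc 0}" by auto
lemma atMost2': "{..2::nat} = {0,1,2}" by auto
lemma atMost3': "{..3::nat} = {0,1,2,3}" by auto
lemma atMost4': "{..4::nat} = {0,1,2,3,4}" by auto
lemma atMost5': "{..5::nat} = {0,1,2,3,4,5}" by auto

lemma incr_ge: "strict_incr6 e \<Longrightarrow> i < 6 \<Longrightarrow> i \<le> e i"
proof (induction i)
  case 0 then show ?case by simp
next
  case (Suc i)
  then have "e i < e (Suc i)" unfolding strict_incr6_def by auto
  with Suc show ?case by simp
qed

context curve2 begin

lemma Dt1': "D (Suc 0) x = 1" using Dt1 by simp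

lemma det_nz: "det (mat 6 6 (\<lambda>(i,j). D i (conic_monomials x y j))) \<noteq> 0"
proof
  let ?A = "mat 6 6 (\<lambda>(i,j). D i (conic_monomials x y j))"
  assume "det ?A = 0"
  then obtain v where v: "v \<in> carrier_vec 6" "v \<noteq> 0\<^sub>v 6" "?A *\<^sub>v v = 0\<^sub>v 6"
    using det_0_iff_vec_prod_zero_field[OF mat_carrier] by blast
  have dv: "dim_vec v = 6" using v(1) by simp
  have rowi: "(\<Sum>j\<in>{0..<6}. D i (conic_monomials x y j) * v $ j) = 0" if i: "i < 6" for i
  proof -
    have "(?A *\<^sub>v v) $ i = 0" using v(3) i by simp
    then have "row ?A i \<bullet> v = 0" using i by simp
    then have "(\<Sum>j\<in>{0..<6}. row ?A i $ j * v $ j) = 0" unfolding scalar_prod_def dv .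
    moreover have "(\<Sum>j\<in>{0..<6}. row ?A i $ j * v $ j) = (\<Sum>j\<in>{0..<6}. D i (conic_monomials x y j) * v $ j)"
      by (rule sum.cong) (use i in auto)
    ultimately show ?thesis by simp
  qed
  note simps = set6 conic_monomials_def power2_eq_square Dmul D0 Dt1 Dt1' Dt2 Dconst[OF _ K_one]
    atMost0' atMost1' atMost2' atMost3' atMost4' atMost5'
  have e0: "v$0 + x*v$1 + y*v$2 + x*x*v$3 + x*y*v$4 + y*y*v$5 = 0"
    using rowi[of 0] by (simp add: simps algebra_simps)
  have e1: "v$1 + Y 1*v$2 + 2*x*v$3 + (x*Y 1 + y)*v$4 + 2*y*Y 1*v$5 = 0"
    using rowi[of 1] by (simp add: simps algebra_simps)
  have e2: "v$3 + Y 2*v$2 + (x*Y 2 + Y 1)*v$4 + (2*y*Y 2 + Y 1^2)*v$5 = 0"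
    using rowi[of 2] by (simp add: simps algebra_simps)
  have e3: "Y 3 * (v$2 + x*v$4 + 2*y*v$5) + Y 2 * (v$4 + 2*Y 1*v$5) = 0"
    using rowi[of 3] by (simp add: simps algebra_simps)
  have e4: "Y 4 * (v$2 + x*v$4 + 2*y*v$5) + Y 3 * (v$4 + 2*Y 1*v$5) + Y 2^2 * v$5 = 0"
    using rowi[of 4] by (simp add: simps algebra_simps)
  have e5: "Y 5 * (v$2 + x*v$4 + 2*y*v$5) + Y 4 * (v$4 + 2*Y 1*v$5) + 2 * Y 2 * Y 3 * v$5 = 0"
    using rowi[of 5] by (simp add: simps algebra_simps)
  from cramer3[OF e3 e4 e5 Delta_nz]
  have "v$5 = 0" "v$4 = 0" "v$2 = 0" by auto
  moreover from this e2 have "v$3 = 0" by simp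
  moreover from calculation e1 have "v$1 = 0" by simp
  moreover from calculation e0 have "v$0 = 0" by simp
  ultimately have "\<forall>i<6. v $ i = 0" by (auto simp: less_Suc_eq numeral_eq_Suc)
  then have "v = 0\<^sub>v 6" using dv by (intro eq_vecI) auto
  then show False using v(2) by simp
qed

lemma classical: "classical_wrt_conics D x y"
  unfolding classical_wrt_conics_def
proof (intro exI[of _ id] conjI allI impI)
  have w: "wronskian_rows D (conic_monomials x y) id = det (mat 6 6 (\<lambda>(i,j). D i (conic_monomials x y j)))"
    unfolding wronskian_rows_def by simp
  show "is_conic_order_seq D x y id"
    unfolding is_conic_order_seq_def
  proof (intro conjI allI impI)
    show "strict_incr6 id" unfolding strict_incr6_def by simp
    show "wronskian_rows D (conic_monomials x y) id \<noteq> 0" using w det_nz by simp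
    fix e assume "strict_incr6 e \<and> wronskian_rows D (conic_monomials x y) e \<noteq> 0"
    then have "\<forall>i<6. i \<le> e i" using incr_ge by blast
    then show "\<not> lex_less6 e id" unfolding lex_less6_def by (auto simp: not_less)
  qed
  fix i :: nat assume "i < 6" then show "id i = i" by simp
qed

end

context charp begin
lemma dvd0: "p dvd k \<Longrightarrow> (of_nat k :: 'f) = 0"
  using p0 by (auto elim!: dvdE)
end

theorem proposition3p3:
  fixes p h q n m :: nat and a b x y :: "'f::field" and D :: "nat \<Rightarrow> 'f \<Rightarrow> 'f"
  assumes "prime p" and "p > 5" and "h > 0" and "q = p ^ h"
    and "of_nat p = (0::'f)"
    and "alg_closed_subfield (const_field p :: 'f set)"
    and "a ^ q = a" and "a \<noteq> 0" and "b ^ q = b" and "b \<noteq> 0"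
    and "m > 2" and "n \<ge> m"
    and "transcendental_over (const_field p) x"
    and "a * x ^ n + b * y ^ m = 1"
    and "hasse_derivation (const_field p) x D"
    and "(p dvd (2*n - 1) \<and> p dvd (m + 1)) \<or> (p dvd (2*m - 1) \<and> p dvd (n + 1)) \<or>
         (p dvd (2*n - 1) \<and> p dvd (m - 2)) \<or> (p dvd (2*m - 1) \<and> p dvd (n - 2)) \<or>
         (p dvd (m + 1) \<and> p dvd (n - 2)) \<or> (p dvd (n + 1) \<and> p dvd (m - 2))"
  shows "classical_wrt_conics D x y"
proof -
  interpret cp: charp p "const_field p :: 'f set"
    by unfold_locales (use assms(1,2,5) in auto)
  have aK: "a \<in> const_field p" unfolding const_field_def using assms(3,4,7) by blast
  have bK: "b \<in> const_field p" unfolding const_field_def using assms(3,4,9) by blast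
  have n2: "n \<ge> 2" "m \<ge> 2" using assms(11,12) by auto
  have c2n: "p dvd (2*n - 1) \<Longrightarrow> 2 * (of_nat n::'f) = 1"
  proof -
    assume "p dvd (2*n - 1)"
    then have "(of_nat (2*n - 1) :: 'f) = 0" by (rule cp.dvd0)
    moreover have "(of_nat (2*n - 1) :: 'f) = 2 * of_nat n - 1" using n2 by (simp add: of_nat_diff)
    ultimately show ?thesis by simp
  qed
  have c2m: "p dvd (2*m - 1) \<Longrightarrow> 2 * (of_nat m::'f) = 1"
  proof -
    assume "p dvd (2*m - 1)"
    then have "(of_nat (2*m - 1) :: 'f) = 0" by (rule cp.dvd0)
    moreover have "(of_nat (2*m - 1) :: 'f) = 2 * of_nat m - 1" using n2 by (simp add: of_nat_diff)
    ultimately show ?thesis by simp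
  qed
  have cn1: "p dvd (n + 1) \<Longrightarrow> (of_nat n::'f) = -1"
  proof -
    assume "p dvd (n + 1)"
    then have "(of_nat (n + 1) :: 'f) = 0" by (rule cp.dvd0)
    then show ?thesis by (simp add: eq_neg_iff_add_eq_0 add.commute)
  qed
  have cm1: "p dvd (m + 1) \<Longrightarrow> (of_nat m::'f) = -1"
  proof -
    assume "p dvd (m + 1)"
    then have "(of_nat (m + 1) :: 'f) = 0" by (rule cp.dvd0)
    then show ?thesis by (simp add: eq_neg_iff_add_eq_0 add.commute)
  qed
  have cn2: "p dvd (n - 2) \<Longrightarrow> (of_nat n::'f) = 2"
  proof -
    assume "p dvd (n - 2)"
    then have "(of_nat (n - 2) :: 'f) = 0" by (rule cp.dvd0)
    then show ?thesis using n2 by (simp add: of_nat_diff)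
  qed
  have cm2: "p dvd (m - 2) \<Longrightarrow> (of_nat m::'f) = 2"
  proof -
    assume "p dvd (m - 2)"
    then have "(of_nat (m - 2) :: 'f) = 0" by (rule cp.dvd0)
    then show ?thesis using n2 by (simp add: of_nat_diff)
  qed
  have cs: "(2 * (of_nat n::'f) = 1 \<and> (of_nat m::'f) = -1) \<or> ((of_nat n::'f) = -1 \<and> 2 * (of_nat m::'f) = 1) \<or>
      (2 * (of_nat n::'f) = 1 \<and> (of_nat m::'f) = 2) \<or> ((of_nat n::'f) = 2 \<and> 2 * (of_nat m::'f) = 1) \<or>
      ((of_nat n::'f) = 2 \<and> (of_nat m::'f) = -1) \<or> ((of_nat n::'f) = -1 \<and> (of_nat m::'f) = 2)"
    using assms(16) c2n c2m cn1 cm1 cn2 cm2 by blast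
  have mnz: "(of_nat m::'f) \<noteq> 0"
  proof
    assume "(of_nat m::'f) = 0"
    then show False using cs cp.nz2 by auto
  qed
  interpret cv: curve2 p "const_field p" x D a b y n m
  proof unfold_locales
    show "hasse_derivation (const_field p) x D" by (rule assms(15))
    show "1 \<in> const_field p" unfolding const_field_def by (intro CollectI exI[of _ 1]) simp
    show "a \<in> const_field p" by (rule aK)
    show "b \<in> const_field p" by (rule bK)
    show "a \<noteq> 0" "b \<noteq> 0" by (rule assms(8), rule assms(10))
    show "n > 0" "m > 0" using n2 by auto
    show "transcendental_over (const_field p) x" by (rule assms(13))
    show "a * x ^ n + b * y ^ m = 1" by (rule assms(14))
    show "(of_nat m::'f) \<noteq> 0" by (rule mnz)
    show "(2 * (of_nat n::'f) = 1 \<and> (of_nat m::'f) = -1) \<or> ((of_nat n::'f) = -1 \<and> 2 * (of_nat m::'f) = 1) \<or>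
      (2 * (of_nat n::'f) = 1 \<and> (of_nat m::'f) = 2) \<or> ((of_nat n::'f) = 2 \<and> 2 * (of_nat m::'f) = 1) \<or>
      ((of_nat n::'f) = 2 \<and> (of_nat m::'f) = -1) \<or> ((of_nat n::'f) = -1 \<and> (of_nat m::'f) = 2)" by (rule cs)
  qed
  show ?thesis by (rule cv.classical)
qed

end
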